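(* Let $r\in\{-1,+1\}$ and $\Phi(x,y)=r\phi(x-y)$. For any proper lsc $f:\mathbb R^n\to\overline{\mathbb R}$ and any $\bar x\in\mathbb R^n$ one has $\partial_\Phi f(\bar x)\subseteq\bar x-\nabla\phi^*(r\hat\partial f(\bar x))$. Moreover, the following are equivalent: (a) for every $\bar v\in\partial f(\bar x)$, $f(x)\ge f(\bar x)+r\phi(x-\bar x+\nabla\phi^*(r\bar v))-r\phi(\nabla\phi^*(r\bar v))$ for all $x\in\mathbb R^n$; (b) $\partial_\Phi f(\bar x)=\bar x-\nabla\phi^*(r\partial f(\bar x))$. Under either condition, $\partial f(\bar x)=\hat\partial f(\bar x)$. In particular, if $f$ is a-weakly convex (taking $r=-1$) or a-strongly convex (taking $r=+1$), then $\partial f=\hat\partial f$ and $\operatorname{dom}\partial_\Phi f=\operatorname{dom}\hat\partial f$.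
   Context: Standing assumption: $\phi:\mathbb R^n\to\mathbb R$ is convex, finite-valued, differentiable and strictly convex (Legendre with full domain), super-coercive; $\phi^*$ has the same properties and $\nabla\phi^*=(\nabla\phi)^{-1}$. $\hat\partial f$ is the regular (Fréchet) subdifferential and $\partial f$ the limiting subdifferential. For $\bar x\in\operatorname{dom}f$, $\partial_\Phi f(\bar x)=\{\bar y: f(x)\ge f(\bar x)+\Phi(x,\bar y)-\Phi(\bar x,\bar y)\ \forall x\}$ ($\emptyset$ if $\bar x\notin\operatorname{dom}f$); $\operatorname{dom}T=\{x:T(x)\ne\emptyset\}$. A proper lsc $f$ is a-weakly convex if for every $(\bar x,\bar v)\in\operatorname{graph}\partial f$: $f(x)\ge f(\bar x)-\phi(x-\bar x+\nabla\phi^*(-\bar v))+\phi(\nabla\phi^*(-\bar v))$ for all $x$; a-strongly convex if for every such pair $f(x)\ge f(\bar x)+\phi(x-\bar x+\nabla\phi^*(\bar v))-\phi(\nabla\phi^*(\bar v))$ for all $x$. *)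

theory Defs
  imports "HOL-Analysis.Analysis"
begin

text \<open>R^n is rendered as an arbitrary Euclidean space 'a. Extended-real valued
functions are ereal valued.\<close>

definition strictly_convex_on :: "'a::real_vector set \<Rightarrow> ('a \<Rightarrow> real) \<Rightarrow> bool" where
  "strictly_convex_on S f \<longleftrightarrow> convex S \<and>
     (\<forall>x\<in>S. \<forall>y\<in>S. x \<noteq> y \<longrightarrow> (\<forall>u::real. 0 < u \<and> u < 1 \<longrightarrow>
        f (u *\<^sub>R x + (1 - u) *\<^sub>R y) < u * f x + (1 - u) * f y))"

definition super_coercive :: "('a::real_normed_vector \<Rightarrow> real) \<Rightarrow> bool" where
  "super_coercive f \<longleftrightarrow> filterlim (\<lambda>x. f x / norm x) at_top at_infinity"

definition grad :: "('a::real_inner \<Rightarrow> real) \<Rightarrow> 'a \<Rightarrow> 'a" where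
  "grad f x = (THE g. GDERIV f x :> g)"

definition conjugate :: "('a::real_inner \<Rightarrow> real) \<Rightarrow> 'a \<Rightarrow> real" where
  "conjugate f y = (SUP x. inner x y - f x)"

definition legendre_reference :: "('a::euclidean_space \<Rightarrow> real) \<Rightarrow> bool" where
  "legendre_reference \<phi> \<longleftrightarrow>
     convex_on UNIV \<phi> \<and> strictly_convex_on UNIV \<phi> \<and> (\<forall>x. \<phi> differentiable at x) \<and>
     super_coercive \<phi> \<and>
     convex_on UNIV (conjugate \<phi>) \<and> strictly_convex_on UNIV (conjugate \<phi>) \<and>
     (\<forall>y. conjugate \<phi> differentiable at y) \<and> super_coercive (conjugate \<phi>) \<and>
     (\<forall>x. grad (conjugate \<phi>) (grad \<phi> x) = x) \<and>
     (\<forall>y. grad \<phi> (grad (conjugate \<phi>) y) = y)"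

definition proper :: "('a \<Rightarrow> ereal) \<Rightarrow> bool" where
  "proper f \<longleftrightarrow> (\<forall>x. f x \<noteq> -\<infinity>) \<and> (\<exists>x. f x \<noteq> \<infinity>)"

definition lsc :: "('a::topological_space \<Rightarrow> ereal) \<Rightarrow> bool" where
  "lsc f \<longleftrightarrow> (\<forall>x. f x \<le> Liminf (at x) f)"

definition edom :: "('a \<Rightarrow> ereal) \<Rightarrow> 'a set" where
  "edom f = {x. f x < \<infinity>}"

definition regular_subdiff :: "('a::real_inner \<Rightarrow> ereal) \<Rightarrow> 'a \<Rightarrow> 'a set" where
  "regular_subdiff f xb = {v. \<bar>f xb\<bar> \<noteq> \<infinity> \<and>
     (\<forall>\<epsilon>>0. \<exists>\<delta>>0. \<forall>x. norm (x - xb) < \<delta> \<longrightarrow>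
        f x \<ge> f xb + ereal (inner v (x - xb) - \<epsilon> * norm (x - xb)))}"

definition limiting_subdiff :: "('a::real_inner \<Rightarrow> ereal) \<Rightarrow> 'a \<Rightarrow> 'a set" where
  "limiting_subdiff f xb = {v. \<bar>f xb\<bar> \<noteq> \<infinity> \<and>
     (\<exists>xs vs. xs \<longlonglongrightarrow> xb \<and> (\<lambda>k. f (xs k)) \<longlonglongrightarrow> f xb \<and>
        (\<forall>k. vs k \<in> regular_subdiff f (xs k)) \<and> vs \<longlonglongrightarrow> v)}"

definition Phi_subdiff :: "('a \<Rightarrow> 'b \<Rightarrow> real) \<Rightarrow> ('a \<Rightarrow> ereal) \<Rightarrow> 'a \<Rightarrow> 'b set" where
  "Phi_subdiff \<Phi> f xb = (if xb \<in> edom f then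
     {yb. \<forall>x. f x \<ge> f xb + ereal (\<Phi> x yb - \<Phi> xb yb)} else {})"

definition dom_map :: "('a \<Rightarrow> 'b set) \<Rightarrow> 'a set" where
  "dom_map T = {x. T x \<noteq> {}}"

definition a_weakly_convex :: "('a::euclidean_space \<Rightarrow> real) \<Rightarrow> ('a \<Rightarrow> ereal) \<Rightarrow> bool" where
  "a_weakly_convex \<phi> f \<longleftrightarrow> proper f \<and> lsc f \<and>
     (\<forall>xb. \<forall>vb\<in>limiting_subdiff f xb. \<forall>x.
        f x \<ge> f xb + ereal (- \<phi> (x - xb + grad (conjugate \<phi>) (- vb))
                             + \<phi> (grad (conjugate \<phi>) (- vb))))"

definition a_strongly_convex :: "('a::euclidean_space \<Rightarrow> real) \<Rightarrow> ('a \<Rightarrow> ereal) \<Rightarrow> bool" where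
  "a_strongly_convex \<phi> f \<longleftrightarrow> proper f \<and> lsc f \<and>
     (\<forall>xb. \<forall>vb\<in>limiting_subdiff f xb. \<forall>x.
        f x \<ge> f xb + ereal (\<phi> (x - xb + grad (conjugate \<phi>) vb)
                             - \<phi> (grad (conjugate \<phi>) vb)))"

end

theory Submission
  imports Defs
begin

lemma lin_inner:
  fixes D :: "'a::euclidean_space \<Rightarrow> real"
  assumes "linear D" shows "D h = inner h (\<Sum>b\<in>Basis. D b *\<^sub>R b)"
proof -
  have "D h = D (\<Sum>b\<in>Basis. (h \<bullet> b) *\<^sub>R b)" by (simp add: euclidean_representation)
  also have "\<dots> = (\<Sum>b\<in>Basis. (h \<bullet> b) * D b)"
    using assms by (simp add: linear_sum linear_scale)
  also have "\<dots> = inner h (\<Sum>b\<in>Basis. D b *\<^sub>R b)"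
    by (simp add: inner_sum_right mult.commute)
  finally show ?thesis .
qed

lemma grad_ok:
  fixes g :: "'a::euclidean_space \<Rightarrow> real"
  assumes "g differentiable at x"
  shows "(g has_derivative (\<lambda>h. inner h (grad g x))) (at x)"
proof -
  obtain D where D: "(g has_derivative D) (at x)" using assms differentiable_def by blast
  have lin: "linear D" using D has_derivative_linear by blast
  define v where "v = (\<Sum>b\<in>Basis. D b *\<^sub>R b)"
  have Dh: "\<And>h. D h = inner h v" unfolding v_def by (rule lin_inner[OF lin])
  have Dv: "D = (\<lambda>h. inner h v)" using Dh by (rule ext)
  have gv: "GDERIV g x :> v" unfolding gderiv_def using D Dv by simp
  have "(THE g'. GDERIV g x :> g') = v"
  proof (rule the_equality)
    fix w assume "GDERIV g x :> w"
    then have "(\<lambda>h. inner h w) = (\<lambda>h. inner h v)"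
      using gv unfolding gderiv_def using has_derivative_unique by blast
    then have "inner (w - v) w = inner (w - v) v" by (rule fun_cong)
    then have "inner (w - v) (w - v) = 0" by (simp add: inner_diff_right)
    then show "w = v" by simp
  qed (rule gv)
  then show ?thesis using gv unfolding grad_def gderiv_def by simp
qed

lemma reg_sub:
  fixes f :: "'a::real_inner \<Rightarrow> ereal"
  assumes fin: "\<bar>f xb\<bar> \<noteq> \<infinity>" and ge: "\<And>x. f x \<ge> f xb + ereal (g x - g xb)"
    and d: "(g has_derivative (\<lambda>h. inner h w)) (at xb)"
  shows "w \<in> regular_subdiff f xb"
  unfolding regular_subdiff_def
proof (intro CollectI conjI allI impI fin)
  fix e :: real assume e: "e > 0"
  obtain d where d0: "d > 0" and dd: "\<And>y. norm (y - xb) < d \<Longrightarrow>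
     norm (g y - g xb - inner (y - xb) w) \<le> e * norm (y - xb)"
    using d e unfolding has_derivative_at_alt by blast
  show "\<exists>\<delta>>0. \<forall>x. norm (x - xb) < \<delta> \<longrightarrow> f xb + ereal (inner w (x - xb) - e * norm (x - xb)) \<le> f x"
  proof (intro exI conjI allI impI, rule d0)
    fix x assume "norm (x - xb) < d"
    from dd[OF this] have "inner w (x - xb) - e * norm (x - xb) \<le> g x - g xb"
      by (simp add: inner_commute abs_le_iff)
    then have "f xb + ereal (inner w (x - xb) - e * norm (x - xb)) \<le> f xb + ereal (g x - g xb)"
      by (intro add_left_mono) simp
    also have "\<dots> \<le> f x" by (rule ge)
    finally show "f xb + ereal (inner w (x - xb) - e * norm (x - xb)) \<le> f x" .
  qed
qed

lemma reg_lim: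
  assumes "v \<in> regular_subdiff f xb" shows "v \<in> limiting_subdiff f xb"
  using assms unfolding limiting_subdiff_def regular_subdiff_def
  by (intro CollectI conjI; (simp; fail)?) (rule exI[of _ "\<lambda>_. xb"], rule exI[of _ "\<lambda>_. v"], simp add: regular_subdiff_def)

lemma deriv_shift:
  fixes \<phi> :: "'a::euclidean_space \<Rightarrow> real"
  assumes "\<forall>x. \<phi> differentiable at x"
  shows "((\<lambda>x. r * \<phi> (x - c)) has_derivative (\<lambda>h. inner h (r *\<^sub>R grad \<phi> (x0 - c)))) (at x0)"
proof -
  have s: "((\<lambda>x. x - c) has_derivative (\<lambda>h. h)) (at x0)" by (auto intro!: derivative_eq_intros)
  have "((\<lambda>x. \<phi> (x - c)) has_derivative (\<lambda>h. inner h (grad \<phi> (x0 - c)))) (at x0)"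
    using has_derivative_compose[OF s grad_ok[of \<phi> "x0 - c"]] assms by simp
  then have "((\<lambda>x. r * \<phi> (x - c)) has_derivative (\<lambda>h. r * inner h (grad \<phi> (x0 - c)))) (at x0)"
    by (rule has_derivative_mult_right)
  then show ?thesis by simp
qed

lemma parts:
  fixes \<phi> :: "'a::euclidean_space \<Rightarrow> real"
    and f :: "'a \<Rightarrow> ereal"
    and r :: real and xb :: 'a
  assumes dphi: "\<forall>x. \<phi> differentiable at x"
    and inv1: "\<forall>x. grad (conjugate \<phi>) (grad \<phi> x) = x"
    and inv2: "\<forall>y. grad \<phi> (grad (conjugate \<phi>) y) = y"
    and r: "r = -1 \<or> r = 1"
    and hproper: "proper f"
    and Phi: "\<Phi> = (\<lambda>x y. r * \<phi> (x - y))"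
  shows "(Phi_subdiff \<Phi> f xb \<subseteq>
           (\<lambda>v. xb - grad (conjugate \<phi>) (r *\<^sub>R v)) ` regular_subdiff f xb)
     \<and> ((\<forall>vb\<in>limiting_subdiff f xb. \<forall>x.
            f x \<ge> f xb + ereal (r * \<phi> (x - xb + grad (conjugate \<phi>) (r *\<^sub>R vb))
                                 - r * \<phi> (grad (conjugate \<phi>) (r *\<^sub>R vb))))
         \<longleftrightarrow> Phi_subdiff \<Phi> f xb =
           (\<lambda>v. xb - grad (conjugate \<phi>) (r *\<^sub>R v)) ` limiting_subdiff f xb)
     \<and> ((\<forall>vb\<in>limiting_subdiff f xb. \<forall>x.
            f x \<ge> f xb + ereal (r * \<phi> (x - xb + grad (conjugate \<phi>) (r *\<^sub>R vb))
                                 - r * \<phi> (grad (conjugate \<phi>) (r *\<^sub>R vb))))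
         \<longrightarrow> limiting_subdiff f xb = regular_subdiff f xb)"
proof -
  let ?G = "grad (conjugate \<phi>)"
  have rr: "r * r = 1" using r by auto
  have P1: "Phi_subdiff \<Phi> f xb \<subseteq> (\<lambda>v. xb - ?G (r *\<^sub>R v)) ` regular_subdiff f xb"
  proof
    fix y assume y: "y \<in> Phi_subdiff \<Phi> f xb"
    then have dom: "xb \<in> edom f" and ge: "\<And>x. f x \<ge> f xb + ereal (r * \<phi> (x - y) - r * \<phi> (xb - y))"
      unfolding Phi_subdiff_def Phi by (auto split: if_splits)
    have fin: "\<bar>f xb\<bar> \<noteq> \<infinity>" using dom hproper unfolding edom_def proper_def by auto
    define v where "v = r *\<^sub>R grad \<phi> (xb - y)"
    have "v \<in> regular_subdiff f xb"
      unfolding v_def by (rule reg_sub[OF fin ge deriv_shift[OF dphi]])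
    moreover have "y = xb - ?G (r *\<^sub>R v)"
      unfolding v_def using rr inv1 by simp
    ultimately show "y \<in> (\<lambda>v. xb - ?G (r *\<^sub>R v)) ` regular_subdiff f xb" by blast
  qed
  have L: "xb - ?G (r *\<^sub>R vb) \<in> Phi_subdiff \<Phi> f xb \<longleftrightarrow> (\<forall>x.
            f x \<ge> f xb + ereal (r * \<phi> (x - xb + ?G (r *\<^sub>R vb)) - r * \<phi> (?G (r *\<^sub>R vb))))"
    if vb: "vb \<in> limiting_subdiff f xb" for vb
  proof -
    have "xb \<in> edom f" using vb unfolding limiting_subdiff_def edom_def by auto
    then show ?thesis unfolding Phi_subdiff_def Phi by (simp add: diff_diff_eq2 diff_add_eq)
  qed
  have RL: "regular_subdiff f xb \<subseteq> limiting_subdiff f xb" using reg_lim by blast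
  have P2: "(\<forall>vb\<in>limiting_subdiff f xb. \<forall>x.
            f x \<ge> f xb + ereal (r * \<phi> (x - xb + ?G (r *\<^sub>R vb)) - r * \<phi> (?G (r *\<^sub>R vb))))
         \<longleftrightarrow> Phi_subdiff \<Phi> f xb = (\<lambda>v. xb - ?G (r *\<^sub>R v)) ` limiting_subdiff f xb"
  proof
    assume A: "\<forall>vb\<in>limiting_subdiff f xb. \<forall>x.
            f x \<ge> f xb + ereal (r * \<phi> (x - xb + ?G (r *\<^sub>R vb)) - r * \<phi> (?G (r *\<^sub>R vb)))"
    show "Phi_subdiff \<Phi> f xb = (\<lambda>v. xb - ?G (r *\<^sub>R v)) ` limiting_subdiff f xb"
    proof
      show "Phi_subdiff \<Phi> f xb \<subseteq> (\<lambda>v. xb - ?G (r *\<^sub>R v)) ` limiting_subdiff f xb"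
        using P1 RL by blast
      show "(\<lambda>v. xb - ?G (r *\<^sub>R v)) ` limiting_subdiff f xb \<subseteq> Phi_subdiff \<Phi> f xb"
      proof
        fix y assume "y \<in> (\<lambda>v. xb - ?G (r *\<^sub>R v)) ` limiting_subdiff f xb"
        then obtain vb where vb: "vb \<in> limiting_subdiff f xb" and y: "y = xb - ?G (r *\<^sub>R vb)" by blast
        have "xb - ?G (r *\<^sub>R vb) \<in> Phi_subdiff \<Phi> f xb"
          by (rule iffD2[OF L[OF vb]]) (use A vb in blast)
        then show "y \<in> Phi_subdiff \<Phi> f xb" using y by simp
      qed
    qed
  next
    assume B: "Phi_subdiff \<Phi> f xb = (\<lambda>v. xb - ?G (r *\<^sub>R v)) ` limiting_subdiff f xb"
    show "\<forall>vb\<in>limiting_subdiff f xb. \<forall>x.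
            f x \<ge> f xb + ereal (r * \<phi> (x - xb + ?G (r *\<^sub>R vb)) - r * \<phi> (?G (r *\<^sub>R vb)))"
    proof
      fix vb assume vb: "vb \<in> limiting_subdiff f xb"
      then have "xb - ?G (r *\<^sub>R vb) \<in> Phi_subdiff \<Phi> f xb" using B by blast
      then show "\<forall>x. f x \<ge> f xb + ereal (r * \<phi> (x - xb + ?G (r *\<^sub>R vb)) - r * \<phi> (?G (r *\<^sub>R vb)))"
        using L[OF vb] by blast
    qed
  qed
  have P3: "(\<forall>vb\<in>limiting_subdiff f xb. \<forall>x.
            f x \<ge> f xb + ereal (r * \<phi> (x - xb + ?G (r *\<^sub>R vb)) - r * \<phi> (?G (r *\<^sub>R vb))))
         \<longrightarrow> limiting_subdiff f xb = regular_subdiff f xb"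
  proof
    assume A: "\<forall>vb\<in>limiting_subdiff f xb. \<forall>x.
            f x \<ge> f xb + ereal (r * \<phi> (x - xb + ?G (r *\<^sub>R vb)) - r * \<phi> (?G (r *\<^sub>R vb)))"
    show "limiting_subdiff f xb = regular_subdiff f xb"
    proof
      show "limiting_subdiff f xb \<subseteq> regular_subdiff f xb"
      proof
        fix vb assume vb: "vb \<in> limiting_subdiff f xb"
        have "xb - ?G (r *\<^sub>R vb) \<in> Phi_subdiff \<Phi> f xb"
          by (rule iffD2[OF L[OF vb]]) (use A vb in blast)
        then obtain v where v: "v \<in> regular_subdiff f xb" and e: "xb - ?G (r *\<^sub>R vb) = xb - ?G (r *\<^sub>R v)"
          using P1 by blast
        from e have "?G (r *\<^sub>R vb) = ?G (r *\<^sub>R v)" by simp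
        then have "grad \<phi> (?G (r *\<^sub>R vb)) = grad \<phi> (?G (r *\<^sub>R v))" by simp
        then have "r *\<^sub>R vb = r *\<^sub>R v" using inv2 by simp
        then have "vb = v" using r by auto
        then show "vb \<in> regular_subdiff f xb" using v by simp
      qed
    qed (rule RL)
  qed
  show ?thesis by (rule conjI[OF P1 conjI[OF P2 P3]])
qed

theorem mainTheorem8:
  fixes \<phi> :: "'a::euclidean_space \<Rightarrow> real"
    and f :: "'a \<Rightarrow> ereal"
    and r :: real and xb :: 'a
  assumes leg: "legendre_reference \<phi>"
    and r: "r = -1 \<or> r = 1"
    and hproper: "proper f" and hlsc: "lsc f"
  defines "\<Phi> \<equiv> (\<lambda>x y. r * \<phi> (x - y))"
  shows "(Phi_subdiff \<Phi> f xb \<subseteq>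
           (\<lambda>v. xb - grad (conjugate \<phi>) (r *\<^sub>R v)) ` regular_subdiff f xb)
     \<and> ((\<forall>vb\<in>limiting_subdiff f xb. \<forall>x.
            f x \<ge> f xb + ereal (r * \<phi> (x - xb + grad (conjugate \<phi>) (r *\<^sub>R vb))
                                 - r * \<phi> (grad (conjugate \<phi>) (r *\<^sub>R vb))))
         \<longleftrightarrow> Phi_subdiff \<Phi> f xb =
           (\<lambda>v. xb - grad (conjugate \<phi>) (r *\<^sub>R v)) ` limiting_subdiff f xb)
     \<and> ((\<forall>vb\<in>limiting_subdiff f xb. \<forall>x.
            f x \<ge> f xb + ereal (r * \<phi> (x - xb + grad (conjugate \<phi>) (r *\<^sub>R vb))
                                 - r * \<phi> (grad (conjugate \<phi>) (r *\<^sub>R vb))))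
         \<longrightarrow> limiting_subdiff f xb = regular_subdiff f xb)
     \<and> ((r = -1 \<and> a_weakly_convex \<phi> f) \<or> (r = 1 \<and> a_strongly_convex \<phi> f) \<longrightarrow>
           (\<forall>x. limiting_subdiff f x = regular_subdiff f x) \<and>
           dom_map (Phi_subdiff \<Phi> f) = dom_map (regular_subdiff f))"
proof -
  have dphi: "\<forall>x. \<phi> differentiable at x"
    and inv1: "\<forall>x. grad (conjugate \<phi>) (grad \<phi> x) = x"
    and inv2: "\<forall>y. grad \<phi> (grad (conjugate \<phi>) y) = y"
    using leg unfolding legendre_reference_def by simp_all
  note P = parts[OF dphi inv1 inv2 r hproper \<Phi>_def[THEN meta_eq_to_obj_eq]]
  have C: "\<forall>x. \<forall>vb\<in>limiting_subdiff f x. \<forall>z.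
            f z \<ge> f x + ereal (r * \<phi> (z - x + grad (conjugate \<phi>) (r *\<^sub>R vb))
                                 - r * \<phi> (grad (conjugate \<phi>) (r *\<^sub>R vb)))"
    if h: "(r = -1 \<and> a_weakly_convex \<phi> f) \<or> (r = 1 \<and> a_strongly_convex \<phi> f)"
  proof (intro allI ballI)
    fix x vb z assume vb: "vb \<in> limiting_subdiff f x"
    from h show "f z \<ge> f x + ereal (r * \<phi> (z - x + grad (conjugate \<phi>) (r *\<^sub>R vb))
                                 - r * \<phi> (grad (conjugate \<phi>) (r *\<^sub>R vb)))"
    proof
      assume a: "r = -1 \<and> a_weakly_convex \<phi> f"
      then have "f z \<ge> f x + ereal (- \<phi> (z - x + grad (conjugate \<phi>) (- vb))
                             + \<phi> (grad (conjugate \<phi>) (- vb)))"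
        using vb unfolding a_weakly_convex_def by blast
      then show ?thesis using a by simp
    next
      assume a: "r = 1 \<and> a_strongly_convex \<phi> f"
      then have "f z \<ge> f x + ereal (\<phi> (z - x + grad (conjugate \<phi>) vb)
                             - \<phi> (grad (conjugate \<phi>) vb))"
        using vb unfolding a_strongly_convex_def by blast
      then show ?thesis using a by simp
    qed
  qed
  have Q: "(\<forall>x. limiting_subdiff f x = regular_subdiff f x) \<and>
           dom_map (Phi_subdiff \<Phi> f) = dom_map (regular_subdiff f)"
    if h: "(r = -1 \<and> a_weakly_convex \<phi> f) \<or> (r = 1 \<and> a_strongly_convex \<phi> f)"
  proof -
    have E: "limiting_subdiff f x = regular_subdiff f x" for x
      by (rule mp[OF conjunct2[OF conjunct2[OF P[of x]]] spec[OF C[OF h], of x]])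
    have F: "Phi_subdiff \<Phi> f x = (\<lambda>v. x - grad (conjugate \<phi>) (r *\<^sub>R v)) ` regular_subdiff f x" for x
      using iffD1[OF conjunct1[OF conjunct2[OF P[of x]]] spec[OF C[OF h], of x]] E[of x] by simp
    show ?thesis unfolding dom_map_def by (simp add: E F)
  qed
  note PP = P[of xb]
  show ?thesis
    by (rule conjI[OF conjunct1[OF PP] conjI[OF conjunct1[OF conjunct2[OF PP]]
          conjI[OF conjunct2[OF conjunct2[OF PP]] impI[OF Q]]]])
qed

end
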